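(* Let $(M,\rho)$ be a complete metric space, let $f:M\to\mathbb{R}\cup\{+\infty\}$ be proper, lower semicontinuous and bounded below, and let $g:M\to\mathbb{R}\cup\{+\infty\}$ be lower semicontinuous. Assume that for every $x\in\operatorname{dom}|\widetilde\nabla f|$ we have $x\in\operatorname{dom} g$ and $|\widetilde\nabla g|(x)\le|\widetilde\nabla f|(x)$. Then for every $\varepsilon>0$, every $x_0\in\operatorname{dom}|\widetilde\nabla f|$ and every $r\in(0,1)$ there exists $x\in\varepsilon\operatorname{Crit} f$ such that $$f(x)\le f(x_0)-\varepsilon\rho(x,x_0)\quad\text{and}\quad f(x_0)-rg(x_0)\ge f(x)-rg(x).$$ Moreover, for every $\varepsilon>0$ and $r\in(0,1)$, $$\inf_{x\in\operatorname{dom} f}(f(x)-rg(x))=\inf_{x\in\varepsilon\operatorname{Crit} f}(f(x)-rg(x)).$$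
   Context: $\operatorname{dom} f:=\{x:f(x)<+\infty\}$; on $\operatorname{dom} f$, $f(x)-rg(x)=-\infty$ if $g(x)=+\infty$. $[t]^+:=\max\{0,t\}$ (with $[f(x)-f(y)]^+:=0$ if $f(y)=+\infty$). For $x\in\operatorname{dom} f$, the global slope is $|\widetilde\nabla f|(x):=\sup_{y\neq x}\frac{[f(x)-f(y)]^+}{\rho(x,y)}\in[0,+\infty]$, and $\operatorname{dom}|\widetilde\nabla f|:=\{x\in\operatorname{dom} f:\ |\widetilde\nabla f|(x)<+\infty\}$. For $\varepsilon\ge0$, $\varepsilon\operatorname{Crit} f:=\{x\in\operatorname{dom} f:\ |\widetilde\nabla f|(x)\le\varepsilon\}$. *)

theory Defs
  imports "HOL-Analysis.Analysis"
begin

text \<open>Extended-real valued functions on a metric space; values in \<real> \<union> {+\<infinity>} are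
  modelled by ereal-valued functions never taking -\<infinity>.\<close>

definition edom :: "('a \<Rightarrow> ereal) \<Rightarrow> 'a set" where
  "edom f = {x. f x < \<infinity>}"

definition lsc :: "('a::topological_space \<Rightarrow> ereal) \<Rightarrow> bool" where
  "lsc f \<longleftrightarrow> (\<forall>x. \<forall>c. c < f x \<longrightarrow> eventually (\<lambda>y. c < f y) (nhds x))"

definition gslope :: "('a::metric_space \<Rightarrow> ereal) \<Rightarrow> 'a \<Rightarrow> ereal" where
  "gslope f x = max 0 (SUP y\<in>{y. y \<noteq> x}.
      (if f y = \<infinity> then 0 else max 0 (f x - f y)) / ereal (dist x y))"

definition dom_gslope :: "('a::metric_space \<Rightarrow> ereal) \<Rightarrow> 'a set" where
  "dom_gslope f = {x \<in> edom f. gslope f x < \<infinity>}"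

definition epsCrit :: "real \<Rightarrow> ('a::metric_space \<Rightarrow> ereal) \<Rightarrow> 'a set" where
  "epsCrit \<epsilon> f = {x \<in> edom f. gslope f x \<le> ereal \<epsilon>}"

end

theory Submission
  imports Defs
begin

lemma lsc_closed_sub:
  fixes f :: "'a::metric_space \<Rightarrow> ereal"
  assumes "lsc f" "lam > 0"
  shows "closed {y. f y + ereal (lam * dist x y) \<le> ereal c}"
  unfolding closed_def open_dist
proof (intro ballI)
  fix y0 assume "y0 \<in> - {y. f y + ereal (lam * dist x y) \<le> ereal c}"
  hence lt: "ereal c < f y0 + ereal (lam * dist x y0)" by auto
  hence "ereal (c - lam * dist x y0) < f y0" by (cases "f y0") auto
  then obtain t where t1: "c - lam * dist x y0 < t" and t2: "ereal t < f y0"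
    using ereal_dense2[OF \<open>ereal (c - lam * dist x y0) < f y0\<close>] by auto
  from assms(1) t2 have "eventually (\<lambda>y. ereal t < f y) (nhds y0)"
    unfolding lsc_def by blast
  then obtain d1 where d1: "d1 > 0" "\<And>y. dist y y0 < d1 \<Longrightarrow> ereal t < f y"
    unfolding eventually_nhds_metric by blast
  define d where "d = min d1 ((t - (c - lam * dist x y0)) / lam)"
  have "d > 0" using d1 t1 assms(2) by (simp add: d_def)
  moreover have "y \<in> - {y. f y + ereal (lam * dist x y) \<le> ereal c}" if "dist y y0 < d" for y
  proof -
    have "ereal t < f y" using d1 that by (simp add: d_def)
    have "lam * dist x y0 \<le> lam * dist x y + lam * dist y y0"
      using dist_triangle[of x y0 y] assms(2) by (simp add: distrib_left[symmetric])
    moreover have "dist y y0 < (t - (c - lam * dist x y0)) / lam" using that by (simp add: d_def)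
    hence "lam * dist y y0 < t - (c - lam * dist x y0)" using assms(2) by (simp add: field_simps)
    ultimately have "c < t + lam * dist x y" using assms(2)
      by linarith
    thus ?thesis using \<open>ereal t < f y\<close> by (cases "f y") auto
  qed
  ultimately show "\<exists>e>0. \<forall>y. dist y y0 < e \<longrightarrow> y \<in> - {y. f y + ereal (lam * dist x y) \<le> ereal c}"
    by blast
qed

lemma ekeland:
  fixes f :: "'a::complete_space \<Rightarrow> ereal"
  assumes nm: "\<And>x. f x \<noteq> -\<infinity>" and ls: "lsc f" and bd: "\<And>x. ereal c \<le> f x"
    and x0: "f x0 < \<infinity>" and lam: "lam > 0"
  shows "\<exists>a. f a + ereal (lam * dist a x0) \<le> f x0 \<and> (\<forall>y. f a \<le> f y + ereal (lam * dist a y))"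
proof -
  define F where "F x = real_of_ereal (f x)" for x
  have fF: "f x = ereal (F x)" if "f x < \<infinity>" for x
    using that nm[of x] unfolding F_def by (cases "f x") auto
  have Fc: "c \<le> F x" if "f x < \<infinity>" for x
    using bd[of x] fF[OF that] by simp
  define S where "S x = {y. f y + ereal (lam * dist x y) \<le> f x}" for x
  have Smem: "y \<in> S x \<longleftrightarrow> f y < \<infinity> \<and> F y + lam * dist x y \<le> F x" if fx: "f x < \<infinity>" for x y
  proof -
    obtain v where v: "f x = ereal v" using fF[OF fx] by blast
    hence "F x = v" by (simp add: F_def)
    thus ?thesis using v nm[of y] unfolding S_def F_def by (cases "f y") auto
  qed
  have Sself: "x \<in> S x" if "f x < \<infinity>" for x using Smem[OF that] that by simp
  have Strans: "S y \<subseteq> S x" if "f x < \<infinity>" "y \<in> S x" for x y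
  proof
    fix z assume z: "z \<in> S y"
    have y: "f y < \<infinity>" "F y + lam * dist x y \<le> F x" using Smem[OF that(1)] that(2) by auto
    have zz: "f z < \<infinity>" "F z + lam * dist y z \<le> F y" using Smem[OF y(1)] z by auto
    have "lam * dist x z \<le> lam * dist x y + lam * dist y z"
      using dist_triangle[of x z y] lam by (simp add: distrib_left[symmetric])
    hence "F z + lam * dist x z \<le> F x" using y zz by linarith
    thus "z \<in> S x" using Smem[OF that(1)] zz(1) by blast
  qed
  have Sclosed: "closed (S x)" if "f x < \<infinity>" for x
    using lsc_closed_sub[OF ls lam, of x "F x"] fF[OF that] unfolding S_def by simp
  define m where "m x = Inf (F ` S x)" for x
  have mlow: "m x \<le> F y" if mx: "f x < \<infinity>" "y \<in> S x" for x y
    unfolding m_def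
  proof (rule cInf_lower)
    show "F y \<in> F ` S x" using mx by blast
    show "bdd_below (F ` S x)"
    proof (rule bdd_belowI[of _ c])
      fix z assume "z \<in> F ` S x"
      then obtain w where w: "w \<in> S x" "z = F w" by blast
      hence "f w < \<infinity>" using Smem[OF mx(1)] by blast
      thus "c \<le> z" using Fc w(2) by blast
    qed
  qed
  have mex: "\<exists>y. y \<in> S x \<and> F y < m x + e" if mx: "f x < \<infinity>" "e > 0" for x e
  proof -
    have ne: "F ` S x \<noteq> {}" using Sself[OF mx(1)] by blast
    have "Inf (F ` S x) < m x + e" unfolding m_def using mx(2) by linarith
    from cInf_lessD[OF ne this] obtain z where "z \<in> F ` S x" "z < m x + e" by blast
    thus ?thesis by blast
  qed
  define e where "e n = 1 / real (Suc n)" for n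
  have epos: "e n > 0" for n by (simp add: e_def)
  define nxt where "nxt n x = (SOME y. y \<in> S x \<and> F y < m x + e n)" for n x
  have nxt: "nxt n x \<in> S x \<and> F (nxt n x) < m x + e n" if "f x < \<infinity>" for n x
    unfolding nxt_def by (rule someI_ex[OF mex[OF that epos]])
  define X where "X = rec_nat x0 nxt"
  have X0: "X 0 = x0" and XS: "X (Suc n) = nxt n (X n)" for n by (simp_all add: X_def)
  have Xfin: "f (X n) < \<infinity>" for n
  proof (induction n)
    case 0 thus ?case using x0 X0 by simp
  next
    case (Suc n) thus ?case using nxt[OF Suc] Smem[OF Suc] XS by auto
  qed
  have Xstep: "X (Suc n) \<in> S (X n)" "F (X (Suc n)) < m (X n) + e n" for n
    using nxt[OF Xfin[of n]] XS by auto
  have nest: "S (X n) \<subseteq> S (X k)" if "k \<le> n" for k n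
  proof -
    have step: "\<And>n. S (X (Suc n)) \<subseteq> S (X n)" using Strans[OF Xfin Xstep(1)] .
    show ?thesis using lift_Suc_antimono_le[of "\<lambda>n. S (X n)", OF step that] by simp
  qed
  have diam: "lam * dist (X (Suc n)) y \<le> e n" if "y \<in> S (X (Suc n))" for n y
  proof -
    have "y \<in> S (X n)" using nest[of n "Suc n"] that by auto
    hence "m (X n) \<le> F y" using mlow Xfin by blast
    moreover have "F y + lam * dist (X (Suc n)) y \<le> F (X (Suc n))" using Smem[OF Xfin] that by auto
    ultimately show ?thesis using Xstep(2)[of n] by linarith
  qed
  have diam2: "dist y z \<le> 2 * e n / lam" if "y \<in> S (X (Suc n))" "z \<in> S (X (Suc n))" for n y z
  proof -
    have "lam * dist y z \<le> lam * dist (X (Suc n)) y + lam * dist (X (Suc n)) z"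
      using dist_triangle3[of y z "X (Suc n)"] lam by (simp add: distrib_left[symmetric])
    hence "lam * dist y z \<le> 2 * e n" using diam[OF that(1)] diam[OF that(2)] by linarith
    thus ?thesis using lam by (simp add: field_simps)
  qed
  have small: "\<exists>n. 2 * e n / lam < d" if dpos: "d > 0" for d
  proof -
    obtain n where "inverse (real (Suc n)) < d * lam / 2"
    proof -
      have "0 < d * lam / 2" using dpos lam by simp
      from reals_Archimedean[OF this] show ?thesis using that by blast
    qed
    hence "2 * e n < d * lam" by (simp add: e_def inverse_eq_divide)
    hence "2 * e n / lam < d" using lam by (simp add: pos_divide_less_eq)
    thus ?thesis by blast
  qed
  obtain a where a: "\<And>n. a \<in> S (X n)"
  proof (rule decreasing_closed_nest[of "\<lambda>n. S (X n)"])
    show "closed (S (X n))" for n using Sclosed Xfin by blast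
    show "S (X n) \<noteq> {}" for n using Sself Xfin by blast
    show "S (X n) \<subseteq> S (X k)" if "k \<le> n" for k n using nest that by blast
    show "\<exists>n. \<forall>x\<in>S (X n). \<forall>y\<in>S (X n). dist x y < d" if dp: "d > 0" for d
    proof -
      obtain n where "2 * e n / lam < d" using small dp by blast
      show ?thesis
      proof (intro exI[of _ "Suc n"] ballI)
        fix x y assume "x \<in> S (X (Suc n))" "y \<in> S (X (Suc n))"
        thus "dist x y < d" using diam2[of x n y] \<open>2 * e n / lam < d\<close> by linarith
      qed
    qed
  qed (use that in blast)
  have afin: "f a < \<infinity>" using a[of 0] Smem[OF x0] X0 by auto
  have "f a + ereal (lam * dist a x0) \<le> f x0" using a[of 0] X0 unfolding S_def by (simp add: dist_commute)
  moreover have "f a \<le> f y + ereal (lam * dist a y)" for y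
  proof (rule ccontr)
    assume "\<not> ?thesis"
    hence "y \<in> S a" unfolding S_def by auto
    hence yin: "y \<in> S (X n)" for n using Strans[OF Xfin[of n] a[of n]] by blast
    have "dist a y < d" if dp: "d > 0" for d
    proof -
      obtain n where "2 * e n / lam < d" using small dp by blast
      thus ?thesis using diam2[OF a yin, of n] by linarith
    qed
    have "y = a"
    proof (rule ccontr)
      assume "y \<noteq> a"
      hence "dist a y > 0" by simp
      from this[THEN \<open>\<And>d. d > 0 \<Longrightarrow> dist a y < d\<close>] show False by simp
    qed
    with \<open>\<not> ?thesis\<close> show False using afin fF[OF afin] by simp
  qed
  ultimately show ?thesis by blast
qed

lemma max0_ereal: "max 0 (ereal t) = ereal (max 0 t)"
  by (cases "0 \<le> t") (auto simp: max_def)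


lemma gslope_nonneg: "0 \<le> gslope f x"
  unfolding gslope_def by simp

lemma gslope_le:
  fixes f :: "'a::metric_space \<Rightarrow> ereal"
  assumes fa: "f a = ereal A" and ek: "\<And>y. f a \<le> f y + ereal (lam * dist a y)" and lam: "lam \<ge> 0"
  shows "gslope f a \<le> ereal lam"
  unfolding gslope_def
proof (rule max.boundedI)
  show "0 \<le> ereal lam" using lam by simp
  show "(SUP y\<in>{y. y \<noteq> a}. (if f y = \<infinity> then 0 else max 0 (f a - f y)) / ereal (dist a y)) \<le> ereal lam"
  proof (rule SUP_least)
    fix y assume "y \<in> {y. y \<noteq> a}"
    hence dpos: "dist a y > 0" by simp
    show "(if f y = \<infinity> then 0 else max 0 (f a - f y)) / ereal (dist a y) \<le> ereal lam"
    proof (cases "f y")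
      case (real v)
      have "A \<le> v + lam * dist a y" using ek[of y] fa real by simp
      hence "max 0 (A - v) \<le> lam * dist a y" using lam dpos by simp
      hence "max 0 (A - v) / dist a y \<le> lam" using dpos by (simp add: pos_divide_le_eq)
      have h1: "f a - f y = ereal (A - v)" using fa real by simp
      have "(if f y = \<infinity> then 0 else max 0 (f a - f y)) / ereal (dist a y) = max 0 (f a - f y) / ereal (dist a y)" using real by simp
      also have "\<dots> = ereal (max 0 (A - v)) / ereal (dist a y)" by (simp only: h1 max0_ereal)
      also have "\<dots> = ereal (max 0 (A - v) / dist a y)" using dpos by (subst ereal_divide) simp
      finally show ?thesis using \<open>max 0 (A - v) / dist a y \<le> lam\<close> by (simp only: ereal_less_eq)
    next
      case PInf thus ?thesis using lam by simp
    next
      case MInf thus ?thesis using ek[of y] fa by simp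
    qed
  qed
qed

lemma slope_bound:
  fixes g :: "'a::metric_space \<Rightarrow> ereal"
  assumes gs: "gslope g x = ereal s" and gx: "g x = ereal G" and gy: "g y = ereal H"
  shows "G - H \<le> s * dist x y"
proof (cases "y = x")
  case True thus ?thesis using gx gy by simp
next
  case False
  hence dpos: "dist x y > 0" by simp
  have "(if g y = \<infinity> then 0 else max 0 (g x - g y)) / ereal (dist x y)
      \<le> (SUP y\<in>{y. y \<noteq> x}. (if g y = \<infinity> then 0 else max 0 (g x - g y)) / ereal (dist x y))"
    using False by (intro SUP_upper) auto
  also have "\<dots> \<le> gslope g x" unfolding gslope_def by simp
  also have "\<dots> = ereal s" by (rule gs)
  finally have le: "(if g y = \<infinity> then 0 else max 0 (g x - g y)) / ereal (dist x y) \<le> ereal s" .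
  have h1: "g x - g y = ereal (G - H)" using gx gy by simp
  have "(if g y = \<infinity> then 0 else max 0 (g x - g y)) / ereal (dist x y) = max 0 (g x - g y) / ereal (dist x y)" using gy by simp
  also have "\<dots> = ereal (max 0 (G - H)) / ereal (dist x y)" by (simp only: h1 max0_ereal)
  also have "\<dots> = ereal (max 0 (G - H) / dist x y)" using dpos by (subst ereal_divide) simp
  finally have "ereal (max 0 (G - H) / dist x y) \<le> ereal s" using le by (simp only:)
  hence "max 0 (G - H) / dist x y \<le> s" by simp
  hence "max 0 (G - H) \<le> s * dist x y" using dpos by (simp add: pos_divide_le_eq)
  thus ?thesis by linarith
qed

lemma ereal_fin: "x \<noteq> -\<infinity> \<Longrightarrow> x < \<infinity> \<Longrightarrow> \<exists>v. x = ereal v"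
  by (cases x) auto

theorem theorem3p8:
  fixes f g :: "'a::complete_space \<Rightarrow> ereal"
  assumes f_not_minf: "\<And>x. f x \<noteq> -\<infinity>"
      and f_proper: "edom f \<noteq> {}"
      and f_lsc: "lsc f"
      and f_bdd: "\<exists>c::real. \<forall>x. ereal c \<le> f x"
      and g_not_minf: "\<And>x. g x \<noteq> -\<infinity>"
      and g_lsc: "lsc g"
      and fg: "\<And>x. x \<in> dom_gslope f \<Longrightarrow> x \<in> edom g \<and> gslope g x \<le> gslope f x"
  shows "(\<forall>\<epsilon>>0. \<forall>x0\<in>dom_gslope f. \<forall>r. 0 < r \<and> r < 1 \<longrightarrow>
            (\<exists>x\<in>epsCrit \<epsilon> f. f x \<le> f x0 - ereal (\<epsilon> * dist x x0) \<and>
                f x - ereal r * g x \<le> f x0 - ereal r * g x0))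
       \<and> (\<forall>\<epsilon>>0. \<forall>r. 0 < r \<and> r < 1 \<longrightarrow>
            (INF x\<in>edom f. f x - ereal r * g x) = (INF x\<in>epsCrit \<epsilon> f. f x - ereal r * g x))"
proof -
  obtain c where c: "\<And>x. ereal c \<le> f x" using f_bdd by blast
  have ffin: "\<exists>v. f x = ereal v" if "f x < \<infinity>" for x using ereal_fin f_not_minf that by blast
  have gfin: "\<exists>v. g x = ereal v" if "g x < \<infinity>" for x using ereal_fin g_not_minf that by blast
  have sfin: "\<exists>s. gslope h x = ereal s \<and> 0 \<le> s" if "gslope h x < \<infinity>" for h :: "'a \<Rightarrow> ereal" and x
  proof -
    have "0 \<le> gslope h x" by (rule gslope_nonneg)
    thus ?thesis using that by (cases "gslope h x") auto
  qed
  have ekp: "\<exists>a. a \<in> dom_gslope f \<and> gslope f a \<le> ereal lam \<and> f a + ereal (lam * dist a x0) \<le> f x0"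
    if x0: "f x0 < \<infinity>" and lam: "lam > 0" for x0 lam
  proof -
    obtain a where a1: "f a + ereal (lam * dist a x0) \<le> f x0" and a2: "\<And>y. f a \<le> f y + ereal (lam * dist a y)"
      using ekeland[OF f_not_minf f_lsc c x0 lam] by blast
    obtain F0 where F0: "f x0 = ereal F0" using ffin x0 by blast
    have "f a < \<infinity>" using a1 F0 f_not_minf[of a] by (cases "f a") auto
    then obtain A where A: "f a = ereal A" using ffin by blast
    have sl: "gslope f a \<le> ereal lam" using gslope_le[OF A a2] lam by simp
    hence "a \<in> dom_gslope f" using A unfolding dom_gslope_def edom_def by auto
    thus ?thesis using sl a1 by blast
  qed
  have crit_dom: "x \<in> dom_gslope f" if "x \<in> epsCrit e f" for x e
    using that unfolding epsCrit_def dom_gslope_def by auto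
  have P: "\<forall>x0. x0 \<in> dom_gslope f \<longrightarrow> gslope f x0 \<le> ereal (\<epsilon> / r^n) \<longrightarrow>
      (\<exists>x\<in>epsCrit \<epsilon> f. f x + ereal (\<epsilon> * dist x x0) \<le> f x0 \<and> f x - ereal r * g x \<le> f x0 - ereal r * g x0)"
    if ep: "\<epsilon> > 0" and r: "0 < r" "r < 1" for \<epsilon> r n
  proof (induction n)
    case 0
    show ?case
    proof (intro allI impI)
      fix x0 assume x0: "x0 \<in> dom_gslope f" "gslope f x0 \<le> ereal (\<epsilon> / r^0)"
      hence "x0 \<in> epsCrit \<epsilon> f" unfolding epsCrit_def dom_gslope_def by simp
      thus "\<exists>x\<in>epsCrit \<epsilon> f. f x + ereal (\<epsilon> * dist x x0) \<le> f x0 \<and> f x - ereal r * g x \<le> f x0 - ereal r * g x0"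
        by (intro bexI[of _ x0]) auto
    qed
  next
    case (Suc n)
    show ?case
    proof (intro allI impI)
      fix x0 assume x0: "x0 \<in> dom_gslope f" "gslope f x0 \<le> ereal (\<epsilon> / r^Suc n)"
      have "f x0 < \<infinity>" using x0 unfolding dom_gslope_def edom_def by auto
      then obtain F0 where F0: "f x0 = ereal F0" using ffin by blast
      obtain s0 where s0: "gslope f x0 = ereal s0" "0 \<le> s0"
        using sfin x0 unfolding dom_gslope_def by blast
      have s0le: "s0 \<le> \<epsilon> / r^Suc n" using x0(2) s0 by simp
      define cc where "cc = max \<epsilon> (r * s0)"
      have ccpos: "cc > 0" using ep by (simp add: cc_def)
      have rn: "0 < r^n" "r^n \<le> 1" using r by (simp_all add: power_le_one)
      have "\<epsilon> \<le> \<epsilon> / r^n" using rn ep by (simp add: le_divide_eq)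
      moreover have "r * s0 \<le> \<epsilon> / r^n"
      proof -
        have "r * s0 \<le> r * (\<epsilon> / r^Suc n)" by (rule mult_left_mono[OF s0le]) (use r in simp)
        also have "\<dots> = \<epsilon> / r^n" using r by (simp add: field_simps)
        finally show ?thesis .
      qed
      ultimately have ccle: "cc \<le> \<epsilon> / r^n" by (simp add: cc_def)
      obtain a where a: "a \<in> dom_gslope f" "gslope f a \<le> ereal cc" "f a + ereal (cc * dist a x0) \<le> f x0"
        using ekp[OF \<open>f x0 < \<infinity>\<close> ccpos] by blast
      have "gslope f a \<le> ereal (\<epsilon> / r^n)" using a(2) ccle by (meson ereal_less_eq(3) order_trans)
      then obtain x where x: "x \<in> epsCrit \<epsilon> f" "f x + ereal (\<epsilon> * dist x a) \<le> f a"
          "f x - ereal r * g x \<le> f a - ereal r * g a"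
        using Suc a(1) by blast
      have "f a < \<infinity>" using a unfolding dom_gslope_def edom_def by auto
      then obtain A where A: "f a = ereal A" using ffin by blast
      have "f x < \<infinity>" using x(1) unfolding epsCrit_def edom_def by auto
      then obtain X where X: "f x = ereal X" using ffin by blast
      have aA: "A + cc * dist a x0 \<le> F0" using a(3) A F0 by simp
      have xX: "X + \<epsilon> * dist x a \<le> A" using x(2) A X by simp
      have "\<epsilon> * dist x x0 \<le> \<epsilon> * dist x a + \<epsilon> * dist a x0"
        using dist_triangle[of x x0 a] ep by (simp add: distrib_left[symmetric])
      moreover have "\<epsilon> * dist a x0 \<le> cc * dist a x0" by (simp add: cc_def mult_right_mono)
      ultimately have "X + \<epsilon> * dist x x0 \<le> F0" using aA xX by linarith
      hence goal1: "f x + ereal (\<epsilon> * dist x x0) \<le> f x0" using X F0 by simp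
      have gx0: "g x0 < \<infinity>" "gslope g x0 \<le> gslope f x0" using fg[OF x0(1)] unfolding edom_def by auto
      obtain G0 where G0: "g x0 = ereal G0" using gfin gx0 by blast
      have "gslope g x0 < \<infinity>" using gx0(2) s0 by (metis ereal_infty_less_eq(1) ereal.distinct(1) less_ereal.simps(4) not_less)
      then obtain t where t: "gslope g x0 = ereal t" "0 \<le> t" using sfin by blast
      have ts: "t \<le> s0" using gx0(2) t s0 by simp
      have "g a < \<infinity>" using fg[OF a(1)] unfolding edom_def by auto
      then obtain Ga where Ga: "g a = ereal Ga" using gfin by blast
      have "G0 - Ga \<le> t * dist x0 a" by (rule slope_bound[OF t(1) G0 Ga])
      also have "\<dots> \<le> s0 * dist a x0" using ts by (simp add: dist_commute mult_right_mono)
      finally have "r * (G0 - Ga) \<le> r * (s0 * dist a x0)" using r by (simp add: mult_left_mono)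
      also have "\<dots> \<le> cc * dist a x0" unfolding mult.assoc[symmetric] cc_def by (rule mult_right_mono) auto
      finally have "A - r * Ga \<le> F0 - r * G0" using aA by (simp add: algebra_simps)
      hence "f a - ereal r * g a \<le> f x0 - ereal r * g x0" using A Ga F0 G0 by simp
      hence "f x - ereal r * g x \<le> f x0 - ereal r * g x0" using x(3) by (rule order_trans[rotated])
      thus "\<exists>x\<in>epsCrit \<epsilon> f. f x + ereal (\<epsilon> * dist x x0) \<le> f x0 \<and> f x - ereal r * g x \<le> f x0 - ereal r * g x0"
        using goal1 x(1) by blast
    qed
  qed
  have part1: "\<exists>x\<in>epsCrit \<epsilon> f. f x + ereal (\<epsilon> * dist x x0) \<le> f x0 \<and>
                f x - ereal r * g x \<le> f x0 - ereal r * g x0"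
    if ep: "\<epsilon> > 0" and x0: "x0 \<in> dom_gslope f" and r: "0 < r" "r < 1" for \<epsilon> x0 r
  proof -
    obtain s0 where s0: "gslope f x0 = ereal s0" "0 \<le> s0"
      using sfin x0 unfolding dom_gslope_def by blast
    have "\<epsilon> / (s0 + 1) > 0" using ep s0 by simp
    from real_arch_pow_inv[OF this r(2)] obtain n where n: "r^n < \<epsilon> / (s0 + 1)" by blast
    have rn: "0 < r^n" using r by simp
    have "s0 * r^n \<le> (s0 + 1) * r^n" using rn by simp
    also have "\<dots> < \<epsilon>" using n s0 by (simp add: field_simps)
    finally have "s0 \<le> \<epsilon> / r^n" using rn by (simp add: le_divide_eq)
    hence "gslope f x0 \<le> ereal (\<epsilon> / r^n)" using s0 by simp
    thus ?thesis using P[OF ep r] x0 by blast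
  qed
  have part1': "\<exists>x\<in>epsCrit \<epsilon> f. f x \<le> f x0 - ereal (\<epsilon> * dist x x0) \<and>
                f x - ereal r * g x \<le> f x0 - ereal r * g x0"
    if ep: "\<epsilon> > 0" and x0: "x0 \<in> dom_gslope f" and r: "0 < r" "r < 1" for \<epsilon> x0 r
  proof -
    obtain x where x: "x \<in> epsCrit \<epsilon> f" "f x + ereal (\<epsilon> * dist x x0) \<le> f x0"
      "f x - ereal r * g x \<le> f x0 - ereal r * g x0" using part1[OF ep x0 r] by blast
    have "f x0 < \<infinity>" using x0 unfolding dom_gslope_def edom_def by auto
    then obtain F0 where F0: "f x0 = ereal F0" using ffin by blast
    have "f x < \<infinity>" using x(1) unfolding epsCrit_def edom_def by auto
    then obtain X where X: "f x = ereal X" using ffin by blast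
    have "f x \<le> f x0 - ereal (\<epsilon> * dist x x0)" using x(2) X F0 by simp
    thus ?thesis using x by blast
  qed
  have approx: "(INF x\<in>epsCrit \<epsilon> f. f x - ereal r * g x) \<le> ereal (F0 - r * t)"
    if ep: "\<epsilon> > 0" and r: "0 < r" "r < 1" and F0: "f x0 = ereal F0" and t: "ereal t < g x0"
    for \<epsilon> r x0 F0 t
  proof -
    have "eventually (\<lambda>y. ereal t < g y) (nhds x0)" using g_lsc t unfolding lsc_def by blast
    then obtain d where d: "d > 0" "\<And>y. dist y x0 < d \<Longrightarrow> ereal t < g y"
      unfolding eventually_nhds_metric by blast
    have cF: "c \<le> F0" using c[of x0] F0 by simp
    define lam where "lam = (F0 - c + 1) / d"
    have lam: "lam > 0" using cF d by (simp add: lam_def)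
    obtain a where a: "a \<in> dom_gslope f" "f a + ereal (lam * dist a x0) \<le> f x0"
      using ekp[of x0 lam] F0 lam by auto
    have "f a < \<infinity>" using a unfolding dom_gslope_def edom_def by auto
    then obtain A where A: "f a = ereal A" using ffin by blast
    have aA: "A + lam * dist a x0 \<le> F0" using a(2) A F0 by simp
    have "c \<le> A" using c[of a] A by simp
    hence "lam * dist a x0 < lam * d" using aA d lam by (simp add: lam_def)
    hence "dist a x0 < d" using lam by simp
    hence tg: "ereal t < g a" using d by blast
    have "g a < \<infinity>" using fg[OF a(1)] unfolding edom_def by auto
    then obtain Ga where Ga: "g a = ereal Ga" using gfin by blast
    have "t < Ga" using tg Ga by simp
    hence "r * t \<le> r * Ga" using r by simp
    hence "A - r * Ga \<le> F0 - r * t" using aA lam by (smt (verit) zero_le_dist mult_nonneg_nonneg)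
    hence ha: "f a - ereal r * g a \<le> ereal (F0 - r * t)" using A Ga by simp
    obtain x where x: "x \<in> epsCrit \<epsilon> f" "f x - ereal r * g x \<le> f a - ereal r * g a"
      using part1[OF ep a(1) r] by blast
    have "(INF x\<in>epsCrit \<epsilon> f. f x - ereal r * g x) \<le> f x - ereal r * g x"
      using x(1) by (rule INF_lower)
    also have "\<dots> \<le> ereal (F0 - r * t)" using x(2) ha by (rule order_trans)
    finally show ?thesis .
  qed
  have part2: "(INF x\<in>edom f. f x - ereal r * g x) = (INF x\<in>epsCrit \<epsilon> f. f x - ereal r * g x)"
    if ep: "\<epsilon> > 0" and r: "0 < r" "r < 1" for \<epsilon> r
  proof (rule antisym)
    show "(INF x\<in>edom f. f x - ereal r * g x) \<le> (INF x\<in>epsCrit \<epsilon> f. f x - ereal r * g x)"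
      by (rule INF_superset_mono) (auto simp: epsCrit_def)
    show "(INF x\<in>epsCrit \<epsilon> f. f x - ereal r * g x) \<le> (INF x\<in>edom f. f x - ereal r * g x)"
    proof (rule INF_greatest)
      fix x0 assume "x0 \<in> edom f"
      then obtain F0 where F0: "f x0 = ereal F0" using ffin unfolding edom_def by blast
      let ?I = "(INF x\<in>epsCrit \<epsilon> f. f x - ereal r * g x)"
      show "?I \<le> f x0 - ereal r * g x0"
      proof (cases "g x0")
        case (real G0)
        show ?thesis
        proof (rule ereal_le_epsilon2)
          fix e :: real assume e: "e > 0"
          have "ereal (G0 - e / r) < g x0" using real e r by simp
          from approx[OF ep r F0 this] have "?I \<le> ereal (F0 - r * (G0 - e / r))" .
          also have "F0 - r * (G0 - e / r) = F0 - r * G0 + e" using r by (simp add: field_simps)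
          finally show "?I \<le> f x0 - ereal r * g x0 + ereal e" using F0 real by simp
        qed
      next
        case PInf
        have "?I = -\<infinity>"
        proof (rule ereal_bot)
          fix B
          have "ereal ((F0 - B) / r) < g x0" using PInf by simp
          from approx[OF ep r F0 this] have "?I \<le> ereal (F0 - r * ((F0 - B) / r))" .
          also have "F0 - r * ((F0 - B) / r) = B" using r by simp
          finally show "?I \<le> ereal B" .
        qed
        thus ?thesis by simp
      next
        case MInf thus ?thesis using g_not_minf by simp
      qed
    qed
  qed
  show ?thesis using part1' part2 by blast
qed

end
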